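(* Let $a\ge b\gg1$. Define \[ E_<:=\Big\{(x,y)\in\mathbb{R}^2:\tfrac{x^2}{a^2}+\tfrac{y^2}{b^2}\le1\Big\},\qquad E_>:=\Big\{(x,y)\in\mathbb{R}^2:\tfrac{x^2}{(a+100\frac ab)^2}+\tfrac{y^2}{(b+100)^2}\ge1\Big\}. \] Then no square of side length $1$ in $\mathbb{R}^2$ intersects both $E_<$ and $E_>$. The same holds with $E_<,E_>$ replaced by \[ E'_<:=\Big\{(x,y):\tfrac{x^2}{(a-100\frac ab)^2}+\tfrac{y^2}{(b-100)^2}\le1\Big\},\qquad E'_>:=\Big\{(x,y):\tfrac{x^2}{a^2}+\tfrac{y^2}{b^2}\ge1\Big\}. \]
   Context: "$b\gg1$" means $b\ge C$ for a sufficiently large absolute constant $C$. *)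

theory Defs
  imports Complex_Main
begin

definition unit_square :: "(real \<times> real) set \<Rightarrow> bool" where
  "unit_square S \<longleftrightarrow> (\<exists>p1 p2 c d. c\<^sup>2 + d\<^sup>2 = 1 \<and>
     S = {(p1 + s * c - t * d, p2 + s * d + t * c) | s t. 0 \<le> s \<and> s \<le> 1 \<and> 0 \<le> t \<and> t \<le> 1})"

definition ellipse_le :: "real \<Rightarrow> real \<Rightarrow> (real \<times> real) set" where
  "ellipse_le A B = {(x, y). x\<^sup>2 / A\<^sup>2 + y\<^sup>2 / B\<^sup>2 \<le> 1}"

definition ellipse_ge :: "real \<Rightarrow> real \<Rightarrow> (real \<times> real) set" where
  "ellipse_ge A B = {(x, y). x\<^sup>2 / A\<^sup>2 + y\<^sup>2 / B\<^sup>2 \<ge> 1}"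

end

theory Submission
  imports Defs
begin

definition gg :: "real \<Rightarrow> real \<Rightarrow> real \<Rightarrow> real \<Rightarrow> real" where
  "gg a b x y = sqrt ((x/a)^2 + (y/b)^2)"

lemma gg_tri: "gg a b (x+u) (y+v) \<le> gg a b x y + gg a b u v"
proof -
  have e: "\<And>p q. sqrt (p^2 + q^2) = cmod (Complex p q)" by (simp add: cmod_def)
  have "cmod (Complex (x/a + u/a) (y/b + v/b)) \<le> cmod (Complex (x/a) (y/b)) + cmod (Complex (u/a) (v/b))"
  proof -
    have "Complex (x/a + u/a) (y/b + v/b) = Complex (x/a) (y/b) + Complex (u/a) (v/b)"
      by (simp add: complex_eq_iff)
    thus ?thesis using norm_triangle_ineq[of "Complex (x/a) (y/b)" "Complex (u/a) (v/b)"] by simp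
  qed
  thus ?thesis unfolding gg_def e by (simp add: add_divide_distrib)
qed

lemma gg_small:
  assumes "0 < b" "b \<le> a" "x^2 + y^2 \<le> 2"
  shows "gg a b x y < 2 / b"
proof -
  have "(x/a)^2 \<le> (x/b)^2"
    using assms by (simp add: power_divide divide_left_mono)
  hence "(x/a)^2 + (y/b)^2 \<le> (x^2+y^2)/b^2" by (simp add: power_divide add_divide_distrib)
  also have "\<dots> \<le> 2 / b^2" using assms by (simp add: divide_right_mono)
  also have "\<dots> < (2/b)^2" using assms by (simp add: power_divide divide_strict_right_mono)
  finally have "(x/a)^2 + (y/b)^2 < (2/b)^2" .
  hence "gg a b x y < sqrt ((2/b)^2)" unfolding gg_def by (simp only: real_sqrt_less_mono)
  thus ?thesis using assms by simp
qed

lemma sq_dist: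
  assumes "unit_square S" "P \<in> S" "Q \<in> S"
  shows "(fst Q - fst P)^2 + (snd Q - snd P)^2 \<le> 2"
proof -
  obtain p1 p2 c d where cd: "c^2 + d^2 = 1" and S:
    "S = {(p1 + s * c - t * d, p2 + s * d + t * c) | s t. 0 \<le> s \<and> s \<le> 1 \<and> 0 \<le> t \<and> t \<le> 1}"
    using assms(1) unfolding unit_square_def by blast
  obtain s t where st: "0 \<le> s" "s \<le> 1" "0 \<le> t" "t \<le> 1" and P: "P = (p1 + s * c - t * d, p2 + s * d + t * c)"
    using assms(2) S by blast
  obtain s' t' where st': "0 \<le> s'" "s' \<le> 1" "0 \<le> t'" "t' \<le> 1" and Q: "Q = (p1 + s' * c - t' * d, p2 + s' * d + t' * c)"
    using assms(3) S by blast
  have "(fst Q - fst P)^2 + (snd Q - snd P)^2 = ((s'-s)^2 + (t'-t)^2) * (c^2+d^2)"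
    unfolding P Q by (simp add: algebra_simps power2_eq_square)
  also have "\<dots> = (s'-s)^2 + (t'-t)^2" using cd by simp
  also have "\<dots> \<le> 1 + 1"
  proof (rule add_mono)
    have "\<bar>s'-s\<bar> \<le> 1" using st st' by linarith
    thus "(s'-s)^2 \<le> 1" by (simp add: abs_square_le_1)
    have "\<bar>t'-t\<bar> \<le> 1" using st st' by linarith
    thus "(t'-t)^2 \<le> 1" by (simp add: abs_square_le_1)
  qed
  finally show ?thesis by simp
qed

lemma core:
  assumes b: "0 < b" "b \<le> a" and mu: "0 < \<mu>" and nu: "\<mu> + 2 / b \<le> \<nu>"
    and S: "unit_square S" and P: "P \<in> S" "P \<in> ellipse_le (\<mu>*a) (\<mu>*b)"
    and Q: "Q \<in> S" "Q \<in> ellipse_ge (\<nu>*a) (\<nu>*b)"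
  shows False
proof -
  obtain x y where Pxy: "P = (x,y)" by (cases P)
  obtain u v where Quv: "Q = (u,v)" by (cases Q)
  have a0: "0 < a" using b by linarith
  have nu0: "0 < \<nu>" using nu mu b by (smt (verit) divide_pos_pos)
  have "x^2/(\<mu>*a)^2 + y^2/(\<mu>*b)^2 \<le> 1" using P(2) unfolding Pxy ellipse_le_def by simp
  hence "((x/a)^2 + (y/b)^2) / \<mu>^2 \<le> 1"
    by (simp add: power_divide power_mult_distrib add_divide_distrib mult.commute)
  hence "(x/a)^2 + (y/b)^2 \<le> \<mu>^2" using mu by (simp add: divide_le_eq)
  hence "sqrt ((x/a)^2 + (y/b)^2) \<le> sqrt (\<mu>^2)" by (rule real_sqrt_le_mono)
  hence gP: "gg a b x y \<le> \<mu>" unfolding gg_def using mu by simp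
  have "u^2/(\<nu>*a)^2 + v^2/(\<nu>*b)^2 \<ge> 1" using Q(2) unfolding Quv ellipse_ge_def by simp
  hence "((u/a)^2 + (v/b)^2) / \<nu>^2 \<ge> 1"
    by (simp add: power_divide power_mult_distrib add_divide_distrib mult.commute)
  hence "(u/a)^2 + (v/b)^2 \<ge> \<nu>^2" using nu0 by (simp add: le_divide_eq)
  hence "sqrt (\<nu>^2) \<le> sqrt ((u/a)^2 + (v/b)^2)" by (rule real_sqrt_le_mono)
  hence gQ: "gg a b u v \<ge> \<nu>" unfolding gg_def using nu0 by simp
  have d: "(u-x)^2 + (v-y)^2 \<le> 2" using sq_dist[OF S P(1) Q(1)] unfolding Pxy Quv by simp
  have "gg a b (u-x) (v-y) < 2/b" using gg_small[OF b d] .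
  moreover have "gg a b u v \<le> gg a b x y + gg a b (u-x) (v-y)"
    using gg_tri[of a b x "u-x" y "v-y"] by simp
  ultimately show False using gP gQ nu by linarith
qed

theorem lemmaA3:
  shows "\<exists>C::real. \<forall>a b::real. C \<le> b \<and> b \<le> a \<longrightarrow>
    (\<forall>S. unit_square S \<longrightarrow>
       \<not> (S \<inter> ellipse_le a b \<noteq> {} \<and>
            S \<inter> ellipse_ge (a + 100 * a / b) (b + 100) \<noteq> {})) \<and>
    (\<forall>S. unit_square S \<longrightarrow>
       \<not> (S \<inter> ellipse_le (a - 100 * a / b) (b - 100) \<noteq> {} \<and>
            S \<inter> ellipse_ge a b \<noteq> {}))"
proof (intro exI[of _ 200] allI impI conjI notI)
  fix a b :: real and S
  assume ab: "200 \<le> b \<and> b \<le> a" and S: "unit_square S"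
  have b0: "0 < b" "b \<le> a" using ab by auto
  {
    assume h: "S \<inter> ellipse_le a b \<noteq> {} \<and> S \<inter> ellipse_ge (a + 100 * a / b) (b + 100) \<noteq> {}"
    then obtain P Q where P: "P \<in> S" "P \<in> ellipse_le (1*a) (1*b)"
      and Q: "Q \<in> S" "Q \<in> ellipse_ge (a + 100 * a / b) (b + 100)" by auto
    have e1: "a + 100 * a / b = ((b+100)/b) * a" "b + 100 = ((b+100)/b) * b"
      using b0 by (auto simp: field_simps)
    have nu: "1 + 2/b \<le> (b+100)/b" using b0 by (simp add: field_simps)
    have Q': "Q \<in> ellipse_ge (((b+100)/b) * a) (((b+100)/b) * b)"
      using Q(2) by (simp only: e1[symmetric])
    show False by (rule core[OF b0 zero_less_one nu S P(1) P(2) Q(1) Q'])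
  next
    assume h: "S \<inter> ellipse_le (a - 100 * a / b) (b - 100) \<noteq> {} \<and> S \<inter> ellipse_ge a b \<noteq> {}"
    then obtain P Q where P: "P \<in> S" "P \<in> ellipse_le (a - 100 * a / b) (b - 100)"
      and Q: "Q \<in> S" "Q \<in> ellipse_ge (1*a) (1*b)" by auto
    have e1: "a - 100 * a / b = ((b-100)/b) * a" "b - 100 = ((b-100)/b) * b"
      using b0 by (auto simp: field_simps)
    have m: "0 < (b-100)/b" using ab by simp
    have nu: "(b-100)/b + 2/b \<le> 1" using b0 by (simp add: field_simps)
    have P': "P \<in> ellipse_le (((b-100)/b) * a) (((b-100)/b) * b)"
      using P(2) by (simp only: e1[symmetric])
    show False by (rule core[OF b0 m nu S P(1) P' Q(1) Q(2)])
  }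
qed

end
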